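(* Let $p,q>0$ and $0<x,y<\tfrac12$. Then $$B_{p,q}(x,y)\le (2p)^{\frac{2x-1}{2}}(2q)^{\frac{2y-1}{2}}\sqrt{\Gamma(-2x+1,2p)\,\Gamma(-2y+1,2q)}.$$
   Context: $B_{p,q}(x,y)=\int_0^1 t^{x-1}(1-t)^{y-1}\exp\!\left(-\frac{p}{t}-\frac{q}{1-t}\right)dt$ is the extended Beta function, and $\Gamma(s,a)=\int_a^\infty u^{s-1}e^{-u}\,du$ denotes the upper incomplete Gamma function. *)

theory Defs
  imports "HOL-Analysis.Analysis"
begin

definition ext_beta :: "real \<Rightarrow> real \<Rightarrow> real \<Rightarrow> real \<Rightarrow> real" where
  "ext_beta p q x y =
     (LINT t:{0<..<1}|lborel. t powr (x - 1) * (1 - t) powr (y - 1) * exp (- p / t - q / (1 - t)))"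

definition upper_inc_Gamma :: "real \<Rightarrow> real \<Rightarrow> real" where
  "upper_inc_Gamma s a = (LINT u:{a<..}|lborel. u powr (s - 1) * exp (- u))"

end

theory Submission
  imports Defs
begin

lemma h_eq:
  fixes c x v :: real assumes "c > 0" "v < 0"
  shows "(-c/v) powr (2*x-2) * exp (-c/(-c/v)) * (c/v^2) = c powr (2*x-1) * ((-v) powr (-2*x) * exp v)"
proof -
  define w where "w = -v"
  have w: "w > 0" using assms w_def by auto
  have v: "v = -w" using w_def by simp
  have e: "-c/(-c/v) = v" using assms by (simp add: field_simps)
  have "(-c/v) powr (2*x-2) = c powr (2*x-2) / w powr (2*x-2)"
    using assms w by (simp add: v powr_divide)
  moreover have "c/v^2 = c powr 1 / w powr 2" using assms w by (simp add: v powr_numeral)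
  ultimately have "(-c/v) powr (2*x-2) * (c/v^2) = (c powr (2*x-2) * c powr 1) / (w powr (2*x-2) * w powr 2)"
    by simp
  also have "... = c powr (2*x-1) / w powr (2*x)"
  proof -
    have "c powr (2*x-2) * c powr 1 = c powr (2*x-1)" by (simp only: powr_add[symmetric]) simp
    moreover have "w powr (2*x-2) * w powr 2 = w powr (2*x)" by (simp only: powr_add[symmetric]) simp
    ultimately show ?thesis by simp
  qed
  also have "... = c powr (2*x-1) * w powr (-2*x)"
    by (simp add: powr_minus divide_inverse)
  finally have H: "(-c/v) powr (2*x-2) * (c/v^2) = c powr (2*x-1) * w powr (-2*x)" .
  have "(-c/v) powr (2*x-2) * exp (-c/(-c/v)) * (c/v^2) = ((-c/v) powr (2*x-2) * (c/v^2)) * exp v"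
    by (simp add: e)
  also have "... = c powr (2*x-1) * ((-v) powr (-2*x) * exp v)" unfolding H w_def by (simp only: mult_ac)
  finally show ?thesis .
qed

lemma exp_integrable_neg:
  fixes c :: real
  shows "set_integrable lborel (einterval (-\<infinity>) (ereal c)) exp"
  by (rule interval_integral_FTC_nonneg(1)[where F=exp and A=0 and B="exp c"])
     (auto intro!: tendsto_eq_intros simp: ereal_tendsto_simps exp_at_bot)


lemma key:
  fixes c x :: real assumes c: "c > 0" and x: "x > 0"
  shows "set_integrable lborel {0<..<1} (\<lambda>t. t powr (2*x-2) * exp (-c/t))"
   and "(LINT t:{0<..<1}|lborel. t powr (2*x-2) * exp (-c/t)) = c powr (2*x-1) * upper_inc_Gamma (-2*x+1) c"
proof -
  define f where "f = (\<lambda>t::real. t powr (2*x-2) * exp (-c/t))"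
  define g where "g = (\<lambda>v::real. -c/v)"
  define g' where "g' = (\<lambda>v::real. c/v^2)"
  have heq: "f (g v) * g' v = c powr (2*x-1) * ((-v) powr (-2*x) * exp v)" if "v < 0" for v
    using h_eq[OF c that, of x] by (simp add: f_def g_def g'_def)
  have hi: "set_integrable lborel (einterval (-\<infinity>) (ereal (-c))) (\<lambda>v. f (g v) * g' v)"
  proof (rule set_integrable_bound[where f="\<lambda>v. c powr (-1) * exp v"])
    show "set_integrable lborel (einterval (-\<infinity>) (ereal (-c))) (\<lambda>v. c powr (-1) * exp v)"
      using exp_integrable_neg[of "-c"] by simp
    show "set_borel_measurable lborel (einterval (-\<infinity>) (ereal (-c))) (\<lambda>v. f (g v) * g' v)"
      unfolding set_borel_measurable_def f_def g_def g'_def by measurable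
    show "AE v in lborel. v \<in> einterval (-\<infinity>) (ereal (-c)) \<longrightarrow> norm (f (g v) * g' v) \<le> norm (c powr (-1) * exp v)"
    proof (rule AE_I2, rule impI)
      fix v assume "v \<in> einterval (-\<infinity>) (ereal (-c))"
      hence v: "v < -c" by simp
      hence v0: "v < 0" using c by simp
      have "(-v) powr (-2*x) \<le> c powr (-2*x)"
        using v c x by (intro powr_mono2') auto
      hence "c powr (2*x-1) * ((-v) powr (-2*x) * exp v) \<le> c powr (2*x-1) * (c powr (-2*x) * exp v)"
        by (intro mult_left_mono mult_right_mono) auto
      also have "... = (c powr (2*x-1) * c powr (-2*x)) * exp v" by (simp only: mult_ac)
      also have "... = c powr (-1) * exp v" by (simp only: powr_add[symmetric]) simp
      finally show "norm (f (g v) * g' v) \<le> norm (c powr (-1) * exp v)"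
        using heq[OF v0] by simp
    qed
  qed
  have c1: "-\<infinity> < ereal (-c)" by simp
  have c2: "DERIV g v :> g' v" if "-\<infinity> < ereal v" "ereal v < ereal (-c)" for v
  proof -
    from that have "v < -c" by simp
    then show ?thesis using c unfolding g_def g'_def
      by (auto intro!: derivative_eq_intros simp: power2_eq_square)
  qed
  have c3: "isCont f (g v)" if "-\<infinity> < ereal v" "ereal v < ereal (-c)" for v
  proof -
    from that have "v < -c" by simp
    then have "g v > 0" using c by (simp add: g_def divide_pos_neg)
    then show ?thesis unfolding f_def by (auto intro!: continuous_intros)
  qed
  have c4: "isCont g' v" if "-\<infinity> < ereal v" "ereal v < ereal (-c)" for v
  proof -
    from that have "v < -c" by simp
    then show ?thesis using c unfolding g'_def by (auto intro!: continuous_intros)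
  qed
  have c5: "0 \<le> f (g v)" for v by (simp add: f_def)
  have c6: "0 \<le> g' v" for v using c by (simp add: g'_def)
  have c7: "((ereal \<circ> g \<circ> real_of_ereal) \<longlongrightarrow> ereal 0) (at_right (-\<infinity>))"
  proof -
    have "(g \<longlongrightarrow> 0) at_bot" unfolding g_def
      by (rule tendsto_divide_0[OF tendsto_const]) (rule filterlim_mono[OF filterlim_ident at_bot_le_at_infinity order_refl])
    then show ?thesis by (simp add: ereal_tendsto_simps)
  qed
  have c8: "((ereal \<circ> g \<circ> real_of_ereal) \<longlongrightarrow> ereal 1) (at_left (ereal (-c)))"
  proof -
    have "(g \<longlongrightarrow> 1) (at_left (-c))" unfolding g_def using c
      by (auto intro!: tendsto_eq_intros)
    then show ?thesis by (simp add: ereal_tendsto_simps)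
  qed
  note S = interval_integral_substitution_nonneg[OF c1 c2 c3 c4 c5 c6 c7 c8 hi]
  show "set_integrable lborel {0<..<1} (\<lambda>t. t powr (2*x-2) * exp (-c/t))"
    using S(1) by (simp add: f_def)
  have "(LINT t:{0<..<1}|lborel. t powr (2*x-2) * exp (-c/t)) = (LBINT t=ereal 0..ereal 1. f t)"
    by (simp add: interval_integral_Ioo f_def)
  also have "... = (LBINT u=ereal c..\<infinity>. f (g (-u)) * g' (-u))"
    using S(2) interval_integral_reflect[of "-\<infinity>" "ereal (-c)" "\<lambda>v. f (g v) * g' v"] by simp
  also have "... = (LINT u:{c<..}|lborel. f (g (-u)) * g' (-u))"
    by (rule interval_integral_to_infinity_eq)
  also have "... = (LINT u:{c<..}|lborel. c powr (2*x-1) * (u powr (-2*x+1-1) * exp (-u)))"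
    by (rule set_lebesgue_integral_cong) (use c heq in auto)
  also have "... = c powr (2*x-1) * upper_inc_Gamma (-2*x+1) c"
    by (simp add: upper_inc_Gamma_def)
  finally show "(LINT t:{0<..<1}|lborel. t powr (2*x-2) * exp (-c/t)) = c powr (2*x-1) * upper_inc_Gamma (-2*x+1) c" .
qed


lemma key2:
  fixes c x :: real assumes c: "c > 0" and x: "x > 0"
  shows "set_integrable lborel {0<..<1} (\<lambda>t. (1-t) powr (2*x-2) * exp (-c/(1-t)))"
   and "(LINT t:{0<..<1}|lborel. (1-t) powr (2*x-2) * exp (-c/(1-t))) = c powr (2*x-1) * upper_inc_Gamma (-2*x+1) c"
proof -
  define G where "G = (\<lambda>s::real. indicator {0<..<1::real} s *\<^sub>R (s powr (2*x-2) * exp (-c/s)))"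
  have eq: "(\<lambda>t. indicator {0<..<1::real} t *\<^sub>R ((1-t) powr (2*x-2) * exp (-c/(1-t)))) = (\<lambda>t. G (1 + (-1) * t))"
    by (auto simp: G_def indicator_def)
  have "integrable lborel G" using key(1)[OF c x] by (simp add: G_def set_integrable_def)
  then show "set_integrable lborel {0<..<1} (\<lambda>t. (1-t) powr (2*x-2) * exp (-c/(1-t)))"
    unfolding set_integrable_def eq by (subst lborel_integrable_real_affine_iff) auto
  have "(LINT t:{0<..<1}|lborel. (1-t) powr (2*x-2) * exp (-c/(1-t))) = (\<integral>t. G (1 + (-1) * t) \<partial>lborel)"
    unfolding set_lebesgue_integral_def eq ..
  also have "... = (\<integral>t. G t \<partial>lborel)"
    using lborel_integral_real_affine[of "-1" G 1] by simp
  also have "... = c powr (2*x-1) * upper_inc_Gamma (-2*x+1) c"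
    using key(2)[OF c x] by (simp add: G_def set_lebesgue_integral_def)
  finally show "(LINT t:{0<..<1}|lborel. (1-t) powr (2*x-2) * exp (-c/(1-t))) = c powr (2*x-1) * upper_inc_Gamma (-2*x+1) c" .
qed

lemma cs_abstract:
  fixes I A B :: real
  assumes A: "A \<ge> 0" and B: "B \<ge> 0" and H: "\<And>l. l > 0 \<Longrightarrow> I \<le> l/2 * A + B / (2*l)"
  shows "I \<le> sqrt (A*B)"
proof (rule ccontr)
  assume "\<not> I \<le> sqrt (A*B)"
  hence I: "I > sqrt (A*B)" by simp
  have I0: "I > 0" using I A B by (meson le_less_trans real_sqrt_ge_zero zero_le_mult_iff)
  show False
  proof (cases "A = 0")
    case True
    have "I \<le> B / (2 * ((B+1)/I))" using H[of "(B+1)/I"] I0 B True by simp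
    also have "... = B * I / (2*(B+1))" using I0 B by (simp add: field_simps)
    also have "... < I" using I0 B by (simp add: field_simps) (smt (verit) mult_nonneg_nonneg)
    finally show False by simp
  next
    case A0: False
    show False
    proof (cases "B = 0")
      case True
      have "I \<le> (I/(A+1))/2 * A" using H[of "I/(A+1)"] I0 A True by simp
      also have "... < I" using I0 A by (simp add: field_simps) (smt (verit) mult_nonneg_nonneg)
      finally show False by simp
    next
      case False
      hence Bp: "B > 0" using B by simp
      have Ap: "A > 0" using A A0 by simp
      define l where "l = sqrt B / sqrt A"
      have l: "l > 0" using Ap Bp by (simp add: l_def)
      have "l/2 * A = sqrt (A*B) / 2" using Ap Bp
        by (simp add: l_def real_sqrt_mult field_simps)
      moreover have "B/(2*l) = sqrt (A*B) / 2" using Ap Bp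
        by (simp add: l_def real_sqrt_mult field_simps)
      ultimately have "I \<le> sqrt (A*B)" using H[OF l] by simp
      with I show False by simp
    qed
  qed
qed


theorem mainTheorem2:
  fixes p q x y :: real
  assumes "p > 0" and "q > 0" and "0 < x" and "x < 1/2" and "0 < y" and "y < 1/2"
  shows "ext_beta p q x y \<le>
           (2*p) powr ((2*x - 1)/2) * (2*q) powr ((2*y - 1)/2) *
           sqrt (upper_inc_Gamma (-2*x + 1) (2*p) * upper_inc_Gamma (-2*y + 1) (2*q))"
proof -
  have p: "2*p > 0" and q: "2*q > 0" using assms by auto
  define \<phi> where "\<phi> = (\<lambda>t::real. t powr (x-1) * exp (-p/t))"
  define \<psi> where "\<psi> = (\<lambda>t::real. (1-t) powr (y-1) * exp (-q/(1-t)))"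
  define A where "A = (LINT t:{0<..<1}|lborel. t powr (2*x-2) * exp (-(2*p)/t))"
  define B where "B = (LINT t:{0<..<1}|lborel. (1-t) powr (2*y-2) * exp (-(2*q)/(1-t)))"
  define G1 where "G1 = upper_inc_Gamma (-2*x + 1) (2*p)"
  define G2 where "G2 = upper_inc_Gamma (-2*y + 1) (2*q)"
  have Aeq: "A = (2*p) powr (2*x-1) * G1" unfolding A_def G1_def using key(2)[OF p assms(3)] by simp
  have Beq: "B = (2*q) powr (2*y-1) * G2" unfolding B_def G2_def using key2(2)[OF q assms(5)] by simp
  have Ai: "set_integrable lborel {0<..<1} (\<lambda>t. t powr (2*x-2) * exp (-(2*p)/t))"
    using key(1)[OF p assms(3)] by simp
  have Bi: "set_integrable lborel {0<..<1} (\<lambda>t. (1-t) powr (2*y-2) * exp (-(2*q)/(1-t)))"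
    using key2(1)[OF q assms(5)] by simp
  have sq1: "(\<phi> t)^2 = t powr (2*x-2) * exp (-(2*p)/t)" if "t \<in> {0<..<1}" for t
  proof -
    have "(t powr (x-1))^2 = t powr (2*x-2)"
      by (simp add: power2_eq_square powr_add[symmetric])
    moreover have "(exp (-p/t))^2 = exp (-(2*p)/t)"
      by (simp add: power2_eq_square exp_add[symmetric])
    ultimately show ?thesis by (simp add: \<phi>_def power_mult_distrib)
  qed
  have sq2: "(\<psi> t)^2 = (1-t) powr (2*y-2) * exp (-(2*q)/(1-t))" if "t \<in> {0<..<1}" for t
  proof -
    have "((1-t) powr (y-1))^2 = (1-t) powr (2*y-2)"
      by (simp add: power2_eq_square powr_add[symmetric])
    moreover have "(exp (-q/(1-t)))^2 = exp (-(2*q)/(1-t))"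
      by (simp add: power2_eq_square exp_add[symmetric])
    ultimately show ?thesis by (simp add: \<psi>_def power_mult_distrib)
  qed
  have A0: "A \<ge> 0" unfolding A_def set_lebesgue_integral_def
    by (rule Bochner_Integration.integral_nonneg) (simp add: indicator_def)
  have B0: "B \<ge> 0" unfolding B_def set_lebesgue_integral_def
    by (rule Bochner_Integration.integral_nonneg) (simp add: indicator_def)
  have eb: "ext_beta p q x y = (LINT t:{0<..<1}|lborel. \<phi> t * \<psi> t)"
    unfolding ext_beta_def
  proof (rule set_lebesgue_integral_cong)
    have e: "exp (a - b) = exp a * exp (- b)" for a b :: real
      by (simp add: exp_add[symmetric])
    show "\<forall>t. t \<in> {0<..<1} \<longrightarrow> t powr (x - 1) * (1 - t) powr (y - 1) * exp (- p / t - q / (1 - t)) = \<phi> t * \<psi> t"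
      by (simp add: e \<phi>_def \<psi>_def mult_ac)
  qed simp
  have main: "ext_beta p q x y \<le> sqrt (A*B)"
  proof (cases "set_integrable lborel {0<..<1} (\<lambda>t. \<phi> t * \<psi> t)")
    case False
    then have "ext_beta p q x y = 0" unfolding eb set_lebesgue_integral_def set_integrable_def
      by (simp add: not_integrable_integral_eq)
    then show ?thesis using A0 B0 by simp
  next
    case True
    show ?thesis unfolding eb
    proof (rule cs_abstract[OF A0 B0])
      fix l :: real assume l: "l > 0"
      have I1: "set_integrable lborel {0<..<1} (\<lambda>t. l/2 * (t powr (2*x-2) * exp (-(2*p)/t)))"
        using Ai by simp
      have I2: "set_integrable lborel {0<..<1} (\<lambda>t. 1/(2*l) * ((1-t) powr (2*y-2) * exp (-(2*q)/(1-t))))"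
        using Bi by simp
      have "(LINT t:{0<..<1}|lborel. \<phi> t * \<psi> t) \<le>
          (LINT t:{0<..<1}|lborel. l/2 * (t powr (2*x-2) * exp (-(2*p)/t)) + 1/(2*l) * ((1-t) powr (2*y-2) * exp (-(2*q)/(1-t))))"
      proof (rule set_integral_mono[OF True set_integral_add(1)[OF I1 I2]])
        fix t :: real assume t: "t \<in> {0<..<1}"
        have "0 \<le> (l * \<phi> t - \<psi> t)^2 / l" using l by simp
        also have "(l * \<phi> t - \<psi> t)^2 / l = l * (\<phi> t)^2 + (\<psi> t)^2 / l - 2 * (\<phi> t * \<psi> t)"
          using l by (simp add: power2_eq_square field_simps)
        finally have "\<phi> t * \<psi> t \<le> l/2 * (\<phi> t)^2 + 1/(2*l) * (\<psi> t)^2" using l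
          by (simp add: field_simps)
        then show "\<phi> t * \<psi> t \<le> l/2 * (t powr (2*x-2) * exp (-(2*p)/t)) + 1/(2*l) * ((1-t) powr (2*y-2) * exp (-(2*q)/(1-t)))"
          using sq1[OF t] sq2[OF t] by simp
      qed
      also have "... = l/2 * A + B/(2*l)"
        using set_integral_add(2)[OF I1 I2] by (simp add: A_def B_def)
      finally show "(LINT t:{0<..<1}|lborel. \<phi> t * \<psi> t) \<le> l/2 * A + B/(2*l)" .
    qed
  qed
  define a where "a = (2*p) powr ((2*x - 1)/2)"
  define b where "b = (2*q) powr ((2*y - 1)/2)"
  have a2: "(2*p) powr (2*x-1) = a^2" unfolding a_def
    by (simp add: power2_eq_square powr_add[symmetric])
  have b2: "(2*q) powr (2*y-1) = b^2" unfolding b_def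
    by (simp add: power2_eq_square powr_add[symmetric])
  have "sqrt (A*B) = sqrt ((a*b)^2 * (G1*G2))" unfolding Aeq Beq a2 b2
    by (simp add: algebra_simps power_mult_distrib)
  also have "... = a * b * sqrt (G1*G2)" unfolding real_sqrt_mult
    by (simp add: a_def b_def)
  finally show ?thesis using main by (simp add: a_def b_def G1_def G2_def)
qed

end
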